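(* Let $n\ge2$ and $K\in\mathcal{C}_e^n$. Then for all $u\in S^{n-1}$, $$\rho_{K^{\diamond}}(u)\,c_K(u)=\rho_K(u)\,c_{K^{\diamond}}(u)=1,$$ and $$V(K^{\diamond})=\omega_n\int_{S^{n-1}}\frac{1}{c_K(u)^n}\,du.$$
   Context: For $x,y\in\mathbb{R}^n$ let $[x,y]=\sqrt{|x|^2|y|^2-(x\cdot y)^2}$. $\mathcal{C}_e^n$ is the class of origin-symmetric convex bodies in $\mathbb{R}^n$ that are intersections of closed solid cylinders $C^{-}(u,r)=\{x:[x,u]\le r\}$ ($u\in S^{n-1}$, $r>0$). The sine polar body is $K^{\diamond}=\{x\in\mathbb{R}^n:[x,y]\le1\text{ for all }y\in K\}$ (for $K\in\mathcal{C}_e^n$ one has $K^\diamond\in\mathcal{C}_e^n$). The cylindrical support function of $K\in\mathcal{C}_e^n$ is $c_K(x)=\max_{y\in K}[x,y]$. The radial function is $\rho_K(u)=\max\{\lambda\ge0:\lambda u\in K\}$. $V$ is volume, $\omega_n=\pi^{n/2}/\Gamma(1+n/2)$, and $du$ is the rotation-invariant probability measure on $S^{n-1}$. *)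

theory Defs
  imports "HOL-Analysis.Analysis"
begin

definition sinbr :: "'a::euclidean_space \<Rightarrow> 'a \<Rightarrow> real" where
  "sinbr x y = sqrt ((norm x)^2 * (norm y)^2 - (x \<bullet> y)^2)"

definition cylinder :: "'a::euclidean_space \<Rightarrow> real \<Rightarrow> 'a set" where
  "cylinder u r = {x. sinbr x u \<le> r}"

definition convex_body :: "'a::euclidean_space set \<Rightarrow> bool" where
  "convex_body K \<longleftrightarrow> compact K \<and> convex K \<and> interior K \<noteq> {}"

definition origin_symmetric :: "'a::real_vector set \<Rightarrow> bool" where
  "origin_symmetric K \<longleftrightarrow> (\<forall>x\<in>K. - x \<in> K)"

definition cyl_class :: "'a::euclidean_space set set" where
  "cyl_class = {K. convex_body K \<and> origin_symmetric K \<and>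
     (\<exists>F. F \<subseteq> {(u, r). norm u = 1 \<and> r > 0} \<and>
          K = (\<Inter>(u, r)\<in>F. cylinder u r))}"

definition sine_polar :: "'a::euclidean_space set \<Rightarrow> 'a set" where
  "sine_polar K = {x. \<forall>y\<in>K. sinbr x y \<le> 1}"

definition cyl_support :: "'a::euclidean_space set \<Rightarrow> 'a \<Rightarrow> real" where
  "cyl_support K x = Sup ((\<lambda>y. sinbr x y) ` K)"

definition radial_fun :: "'a::euclidean_space set \<Rightarrow> 'a \<Rightarrow> real" where
  "radial_fun K u = Sup {t::real. t \<ge> 0 \<and> t *\<^sub>R u \<in> K}"

definition omega :: "nat \<Rightarrow> real" where
  "omega n = pi powr (real n / 2) / Gamma (1 + real n / 2)"

text \<open>Rotation-invariant probability measure on the unit sphere, realised as the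
  normalized cone measure: push-forward of the uniform distribution on the unit
  ball under x \<mapsto> x/|x|.\<close>
definition sphere_prob :: "'a::euclidean_space measure" where
  "sphere_prob = distr (uniform_measure lborel (ball 0 1)) borel (\<lambda>x. sgn x)"

end

theory Submission
  imports Defs
begin


lemma sinbr_inner_le: "(x \<bullet> y)^2 \<le> (norm x)^2 * (norm y)^2"
  for x y :: "'a::euclidean_space"
proof -
  have "\<bar>x \<bullet> y\<bar> \<le> norm x * norm y" by (rule Cauchy_Schwarz_ineq2)
  hence "\<bar>x \<bullet> y\<bar>^2 \<le> (norm x * norm y)^2" by (intro power_mono) auto
  thus ?thesis by (simp add: power_mult_distrib)
qed

lemma sinbr_nonneg: "sinbr x y \<ge> 0"
  unfolding sinbr_def using sinbr_inner_le[of x y] by simp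

lemma sinbr_le: "sinbr x y \<le> norm x * norm y"
proof -
  have "sinbr x y \<le> sqrt ((norm x)^2 * (norm y)^2)"
    unfolding sinbr_def by (intro real_sqrt_le_mono) simp
  also have "\<dots> = norm x * norm y" by (simp add: real_sqrt_mult)
  finally show ?thesis .
qed

lemma sinbr_scale1: "sinbr (c *\<^sub>R x) y = \<bar>c\<bar> * sinbr x y"
proof -
  have "(norm (c *\<^sub>R x))^2 * (norm y)^2 - ((c *\<^sub>R x) \<bullet> y)^2
        = c^2 * ((norm x)^2 * (norm y)^2 - (x \<bullet> y)^2)"
    by (simp add: power_mult_distrib algebra_simps)
  thus ?thesis unfolding sinbr_def by (simp add: real_sqrt_mult)
qed

lemma sinbr_sym: "sinbr x y = sinbr y x"
  unfolding sinbr_def by (simp add: inner_commute mult.commute)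

lemma sinbr_scale2: "sinbr x (c *\<^sub>R y) = \<bar>c\<bar> * sinbr x y"
  using sinbr_scale1[of c y x] by (simp add: sinbr_sym)

lemma sinbr_orth: "x \<bullet> y = 0 \<Longrightarrow> sinbr x y = norm x * norm y"
  unfolding sinbr_def by (simp add: real_sqrt_mult)

lemma sinbr_zero1[simp]: "sinbr 0 y = 0" and sinbr_zero2[simp]: "sinbr x 0 = 0"
  unfolding sinbr_def by simp_all

lemma sinbr_norm_eq: "sinbr x y * norm y = norm ((y \<bullet> y) *\<^sub>R x - (x \<bullet> y) *\<^sub>R y)"
proof -
  define v where "v = (y \<bullet> y) *\<^sub>R x - (x \<bullet> y) *\<^sub>R y"
  have "v \<bullet> v = (y \<bullet> y) * ((y \<bullet> y) * (x \<bullet> x) - (x \<bullet> y)^2)"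
    unfolding v_def by (simp add: inner_diff_left inner_diff_right inner_commute algebra_simps power2_eq_square)
  hence "(norm ((y \<bullet> y) *\<^sub>R x - (x \<bullet> y) *\<^sub>R y))^2
      = (norm y)^2 * ((norm x)^2 * (norm y)^2 - (x \<bullet> y)^2)"
    unfolding v_def[symmetric] by (simp add: power2_norm_eq_inner)
  hence "norm ((y \<bullet> y) *\<^sub>R x - (x \<bullet> y) *\<^sub>R y) = sqrt ((norm y)^2 * ((norm x)^2 * (norm y)^2 - (x \<bullet> y)^2))"
    by (metis norm_ge_zero real_sqrt_unique)
  thus ?thesis unfolding sinbr_def by (simp add: real_sqrt_mult)
qed

lemma sinbr_triangle: "sinbr (x + z) y \<le> sinbr x y + sinbr z y"
proof (cases "y = 0")
  case True thus ?thesis by simp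
next
  case False
  hence ny: "norm y > 0" by simp
  have "sinbr (x + z) y * norm y = norm (((y \<bullet> y) *\<^sub>R x - (x \<bullet> y) *\<^sub>R y) + ((y \<bullet> y) *\<^sub>R z - (z \<bullet> y) *\<^sub>R y))"
    unfolding sinbr_norm_eq by (simp add: algebra_simps inner_add_left scaleR_add_right scaleR_add_left)
  also have "\<dots> \<le> sinbr x y * norm y + sinbr z y * norm y"
    unfolding sinbr_norm_eq by (rule norm_triangle_ineq)
  finally show ?thesis using ny by (simp add: distrib_right[symmetric])
qed

lemma sinbr_lip: "sinbr x y \<le> sinbr x' y + norm (x - x') * norm y"
  using sinbr_triangle[of x' "x - x'" y] sinbr_le[of "x - x'" y] by simp

lemma ortho_unit:
  fixes x :: "'a::euclidean_space"
  assumes "DIM('a) \<ge> 2"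
  obtains w where "norm w = 1" "x \<bullet> w = 0"
proof -
  have "dim {x} \<le> card {x}" by (rule dim_le_card') simp
  hence "dim {x} < DIM('a)" using assms by simp
  then obtain v where v: "v \<noteq> 0" "\<And>y. y \<in> span {x} \<Longrightarrow> orthogonal v y"
    using orthogonal_to_subspace_exists by blast
  have "orthogonal v x" using v(2) by (simp add: span_base)
  hence "x \<bullet> (v /\<^sub>R norm v) = 0" by (simp add: orthogonal_def inner_commute)
  moreover have "norm (v /\<^sub>R norm v) = 1" using v(1) by simp
  ultimately show ?thesis using that by blast
qed


lemma bdd_sinbr:
  assumes "bounded S"
  shows "bdd_above ((\<lambda>y. sinbr x y) ` S)"
proof -
  obtain R where R: "\<forall>y\<in>S. norm y \<le> R" using assms bounded_iff by blast
  have "sinbr x y \<le> norm x * R" if "y \<in> S" for y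
    using sinbr_le[of x y] R that mult_left_mono[of "norm y" R "norm x"] by force
  thus ?thesis by (auto simp: bdd_above_def)
qed

lemma cs_upper: "bounded S \<Longrightarrow> y \<in> S \<Longrightarrow> sinbr x y \<le> cyl_support S x"
  unfolding cyl_support_def by (rule cSUP_upper) (auto intro: bdd_sinbr)

lemma cs_least: "S \<noteq> {} \<Longrightarrow> (\<And>y. y \<in> S \<Longrightarrow> sinbr x y \<le> b) \<Longrightarrow> cyl_support S x \<le> b"
  unfolding cyl_support_def by (rule cSUP_least) auto

lemma cs_nonneg: "bounded S \<Longrightarrow> S \<noteq> {} \<Longrightarrow> cyl_support S x \<ge> 0"
  using cs_upper[of S _ x] sinbr_nonneg[of x] by (meson equals0I order_trans)

lemma cs_scale:
  assumes "bounded S" "S \<noteq> {}" "c \<ge> 0"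
  shows "cyl_support S (c *\<^sub>R x) = c * cyl_support S x"
proof (cases "c = 0")
  case True
  have "cyl_support S 0 = 0"
    using cs_least[OF assms(2), of 0 0] cs_nonneg[OF assms(1,2), of 0] by simp
  thus ?thesis using True by simp
next
  case False
  hence c: "c > 0" using assms(3) by simp
  show ?thesis
  proof (rule antisym)
    show "cyl_support S (c *\<^sub>R x) \<le> c * cyl_support S x"
    proof (rule cs_least[OF assms(2)])
      fix y assume "y \<in> S"
      hence "sinbr x y \<le> cyl_support S x" by (rule cs_upper[OF assms(1)])
      thus "sinbr (c *\<^sub>R x) y \<le> c * cyl_support S x" using c by (simp add: sinbr_scale1)
    qed
    have "cyl_support S x \<le> cyl_support S (c *\<^sub>R x) / c"
    proof (rule cs_least[OF assms(2)])
      fix y assume "y \<in> S"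
      hence "c * sinbr x y \<le> cyl_support S (c *\<^sub>R x)"
        using cs_upper[OF assms(1), of y "c *\<^sub>R x"] c by (simp add: sinbr_scale1)
      thus "sinbr x y \<le> cyl_support S (c *\<^sub>R x) / c" using c by (simp add: field_simps)
    qed
    thus "c * cyl_support S x \<le> cyl_support S (c *\<^sub>R x)" using c by (simp add: field_simps)
  qed
qed

lemma cs_pos:
  fixes S :: "'a::euclidean_space set"
  assumes "DIM('a) \<ge> 2" "bounded S" "ball 0 d \<subseteq> S" "d > 0"
  shows "cyl_support S x \<ge> norm x * (d / 2)"
proof -
  obtain w where w: "norm w = 1" "x \<bullet> w = 0" using ortho_unit assms(1) by blast
  have "(d/2) *\<^sub>R w \<in> ball 0 d" using w assms(4) by simp
  hence "(d/2) *\<^sub>R w \<in> S" using assms(3) by (rule subsetD[rotated])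
  hence "sinbr x ((d/2) *\<^sub>R w) \<le> cyl_support S x" by (rule cs_upper[OF assms(2)])
  moreover have "sinbr x ((d/2) *\<^sub>R w) = norm x * (d/2)"
    using w assms(4) by (simp add: sinbr_scale2 sinbr_orth)
  ultimately show ?thesis by linarith
qed

lemma polar_iff:
  assumes "bounded S" "S \<noteq> {}"
  shows "x \<in> sine_polar S \<longleftrightarrow> cyl_support S x \<le> 1"
proof
  assume "x \<in> sine_polar S"
  hence "\<And>y. y \<in> S \<Longrightarrow> sinbr x y \<le> 1" by (simp add: sine_polar_def)
  thus "cyl_support S x \<le> 1" by (rule cs_least[OF assms(2)])
next
  assume a: "cyl_support S x \<le> 1"
  have "sinbr x y \<le> 1" if "y \<in> S" for y
    using cs_upper[OF assms(1) that, of x] a by linarith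
  thus "x \<in> sine_polar S" by (simp add: sine_polar_def)
qed

lemma zero_in_polar: "0 \<in> sine_polar S"
  by (simp add: sine_polar_def)

lemma radial_polar:
  assumes "bounded S" "S \<noteq> {}" "cyl_support S u > 0"
  shows "radial_fun (sine_polar S) u = 1 / cyl_support S u"
proof -
  have iff: "t *\<^sub>R u \<in> sine_polar S \<longleftrightarrow> t \<le> 1 / cyl_support S u" if "t \<ge> 0" for t
  proof -
    have "t *\<^sub>R u \<in> sine_polar S \<longleftrightarrow> cyl_support S (t *\<^sub>R u) \<le> 1"
      by (rule polar_iff[OF assms(1,2)])
    also have "\<dots> \<longleftrightarrow> t * cyl_support S u \<le> 1" using cs_scale[OF assms(1,2) that] by simp
    also have "\<dots> \<longleftrightarrow> t \<le> 1 / cyl_support S u" using assms(3) by (simp add: le_divide_eq)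
    finally show ?thesis .
  qed
  have eq: "{t. t \<ge> 0 \<and> t *\<^sub>R u \<in> sine_polar S} = {0..1 / cyl_support S u}"
  proof (rule set_eqI)
    fix t
    show "t \<in> {t. t \<ge> 0 \<and> t *\<^sub>R u \<in> sine_polar S} \<longleftrightarrow> t \<in> {0..1 / cyl_support S u}"
      using iff[of t] by auto
  qed
  have "Sup {0..1 / cyl_support S u} = 1 / cyl_support S u"
    using assms(3) by (intro cSup_atLeastAtMost) simp
  thus ?thesis unfolding radial_fun_def eq .
qed

lemma polar_bounded:
  fixes S :: "'a::euclidean_space set"
  assumes "DIM('a) \<ge> 2" "ball 0 d \<subseteq> S" "d > 0"
  shows "bounded (sine_polar S)"
proof -
  have "norm x \<le> 2 / d" if "x \<in> sine_polar S" for x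
  proof -
    obtain w where w: "norm w = 1" "x \<bullet> w = 0" using ortho_unit assms(1) by blast
    have "(d/2) *\<^sub>R w \<in> ball 0 d" using w assms(3) by simp
    hence "(d/2) *\<^sub>R w \<in> S" using assms(2) by (rule subsetD[rotated])
    hence "sinbr x ((d/2) *\<^sub>R w) \<le> 1" using that unfolding sine_polar_def by blast
    moreover have "sinbr x ((d/2) *\<^sub>R w) = norm x * (d/2)"
      using w assms(3) by (simp add: sinbr_scale2 sinbr_orth)
    ultimately have "norm x * d \<le> 2" by simp
    thus ?thesis using assms(3) by (simp add: le_divide_eq)
  qed
  thus ?thesis unfolding bounded_iff by blast
qed

lemma polar_ball:
  assumes "\<And>y. y \<in> S \<Longrightarrow> norm y \<le> R" "R > 0"
  shows "ball 0 (1/R) \<subseteq> sine_polar S"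
proof
  fix x assume "x \<in> ball (0::'a) (1/R)"
  hence x: "norm x * R < 1" using assms(2) by (simp add: field_simps)
  show "x \<in> sine_polar S" unfolding sine_polar_def
  proof (safe)
    fix y assume "y \<in> S"
    hence "norm x * norm y \<le> norm x * R" using assms(1) by (simp add: mult_left_mono)
    thus "sinbr x y \<le> 1" using sinbr_le[of x y] x by linarith
  qed
qed

lemma K_ball:
  assumes "K \<in> cyl_class"
  shows "\<exists>d>0. ball 0 d \<subseteq> K"
proof -
  from assms have cv: "convex K" and sym: "\<And>x. x \<in> K \<Longrightarrow> -x \<in> K" and int: "interior K \<noteq> {}"
    by (auto simp: cyl_class_def convex_body_def origin_symmetric_def)
  then obtain a where "a \<in> interior K" by blast
  then obtain e where e: "e > 0" "ball a e \<subseteq> K" using mem_interior by blast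
  have "z \<in> K" if "z \<in> ball 0 e" for z
  proof -
    have "a + z \<in> K" using e that by (auto simp: dist_norm)
    moreover have "-(a - z) \<in> K" using e that by (intro sym) (auto simp: dist_norm)
    ultimately have mem: "(1/2) *\<^sub>R (a + z) + (1/2) *\<^sub>R (-(a - z)) \<in> K"
      using cv by (intro convexD) auto
    have e1: "(1/2) *\<^sub>R (a + z) + (1/2) *\<^sub>R (-(a - z)) = (1/2) *\<^sub>R ((a + z) + -(a - z))"
      by (simp only: scaleR_right_distrib)
    have e2: "(a + z) + -(a - z) = 2 *\<^sub>R z" by (simp add: scaleR_2)
    have e3: "(1/2) *\<^sub>R (a + z) + (1/2) *\<^sub>R (-(a - z)) = z" unfolding e1 e2 by simp
    show ?thesis using mem unfolding e3 .
  qed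
  thus ?thesis using e by blast
qed

lemma K_bipolar:
  assumes "K \<in> cyl_class"
  shows "sine_polar (sine_polar K) = K"
proof
  show "K \<subseteq> sine_polar (sine_polar K)"
  proof
    fix x assume x: "x \<in> K"
    show "x \<in> sine_polar (sine_polar K)" unfolding sine_polar_def
    proof (safe)
      fix y assume "\<forall>z\<in>K. sinbr y z \<le> 1"
      hence "sinbr y x \<le> 1" using x by blast
      thus "sinbr x y \<le> 1" by (subst sinbr_sym)
    qed
  qed
  from assms obtain F where F: "F \<subseteq> {(u, r). norm u = 1 \<and> r > 0}"
    "K = (\<Inter>(u, r)\<in>F. cylinder u r)" by (auto simp: cyl_class_def)
  show "sine_polar (sine_polar K) \<subseteq> K"
  proof
    fix x assume x: "x \<in> sine_polar (sine_polar K)"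
    show "x \<in> K"
    proof (rule ccontr)
      assume "x \<notin> K"
      then obtain p where p: "p \<in> F" "x \<notin> (case p of (u, r) \<Rightarrow> cylinder u r)"
        using F(2) by blast
      obtain u r where pur: "p = (u, r)" by (cases p)
      have ur0: "(u, r) \<in> F" "\<not> sinbr x u \<le> r" using p pur by (auto simp: cylinder_def)
      hence ur: "(u, r) \<in> F" "sinbr x u > r" by auto
      have r: "r > 0" using F(1) ur(1) by auto
      have "(1/r) *\<^sub>R u \<in> sine_polar K"
        unfolding sine_polar_def
      proof safe
        fix y assume "y \<in> K"
        hence "y \<in> cylinder u r" using F(2) ur(1) by blast
        hence "sinbr y u \<le> r" by (simp add: cylinder_def)
        moreover have "sinbr ((1/r) *\<^sub>R u) y = sinbr u y / r" using r by (simp add: sinbr_scale1)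
        moreover have "sinbr u y = sinbr y u" by (rule sinbr_sym)
        ultimately show "sinbr ((1/r) *\<^sub>R u) y \<le> 1" using r by (simp add: divide_le_eq)
      qed
      hence "sinbr x ((1/r) *\<^sub>R u) \<le> 1" using x by (auto simp: sine_polar_def)
      thus False using ur(2) r by (simp add: sinbr_scale2 field_simps)
    qed
  qed
qed




lemma sphere_null: "sphere (c::'a::euclidean_space) r \<in> null_sets lborel"
  using negligible_sphere[of c r]
  by (auto simp: null_sets_completion_iff negligible_iff_null_sets negligible_convex_frontier)

lemma cone_scale:
  fixes A :: "'a::euclidean_space set"
  assumes A[measurable]: "A \<in> sets borel" and t: "t \<ge> 0"
  shows "emeasure lborel {x::'a. sgn x \<in> A \<and> norm x ^ DIM('a) \<le> t}
       = ennreal t * emeasure lborel {x::'a. sgn x \<in> A \<and> norm x < 1}"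
proof -
  define C1 where "C1 = {y::'a. sgn y \<in> A \<and> norm y \<le> 1}"
  define C0 where "C0 = {y::'a. sgn y \<in> A \<and> norm y < 1}"
  have C0m[measurable]: "C0 \<in> sets borel" unfolding C0_def by measurable
  have C1m[measurable]: "C1 \<in> sets borel" unfolding C1_def by measurable
  have Lm[measurable]: "{x::'a. sgn x \<in> A \<and> norm x ^ DIM('a) \<le> t} \<in> sets borel" by measurable
  have C1eq: "C1 = C0 \<union> (C1 \<inter> sphere 0 1)" unfolding C0_def C1_def by (auto simp: less_le)
  have "C1 \<inter> sphere 0 1 \<in> null_sets lborel"
    by (rule null_sets_subset[OF sphere_null]) auto
  hence C10: "emeasure lborel C1 = emeasure lborel C0"
    using C1eq emeasure_Un_null_set[of C0 lborel "C1 \<inter> sphere 0 1"] by simp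
  show ?thesis
  proof (cases "t = 0")
    case True
    have "{x::'a. sgn x \<in> A \<and> norm x ^ DIM('a) \<le> t} \<subseteq> {0}"
    proof
      fix x :: 'a assume "x \<in> {x::'a. sgn x \<in> A \<and> norm x ^ DIM('a) \<le> t}"
      hence "norm x ^ DIM('a) \<le> 0" using True by simp
      hence "norm x ^ DIM('a) = 0" by (meson norm_ge_zero zero_le_power order.antisym)
      thus "x \<in> {0}" by simp
    qed
    hence "emeasure lborel {x::'a. sgn x \<in> A \<and> norm x ^ DIM('a) \<le> t} \<le> emeasure lborel {0::'a}"
      by (intro emeasure_mono) auto
    thus ?thesis using True by simp
  next
    case False
    hence tp: "t > 0" using t by simp
    define s where "s = root DIM('a) t"
    have sp: "s > 0" using tp by (simp add: s_def)
    have sn: "s ^ DIM('a) = t" using tp unfolding s_def by (intro real_root_pow_pos2) auto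
    have eqset: "{x::'a. sgn x \<in> A \<and> norm x ^ DIM('a) \<le> t} = (\<lambda>y. s *\<^sub>R y + 0) ` C1"
    proof (rule set_eqI, rule iffI)
      fix x :: 'a assume "x \<in> {x::'a. sgn x \<in> A \<and> norm x ^ DIM('a) \<le> t}"
      hence x: "sgn x \<in> A" "norm x ^ DIM('a) \<le> s ^ DIM('a)" using sn by auto
      have "norm x \<le> s" using x(2) sp power_mono_iff[of "norm x" s "DIM('a)"] by simp
      hence "x /\<^sub>R s \<in> C1" using x(1) sp by (simp add: C1_def sgn_scaleR field_simps)
      moreover have "x = s *\<^sub>R (x /\<^sub>R s) + 0" using sp by simp
      ultimately show "x \<in> (\<lambda>y. s *\<^sub>R y + 0) ` C1" by blast
    next
      fix x :: 'a assume "x \<in> (\<lambda>y. s *\<^sub>R y + 0) ` C1"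
      then obtain y where y: "y \<in> C1" "x = s *\<^sub>R y" by auto
      have "norm x \<le> s" using y sp by (simp add: C1_def mult_le_cancel_left1)
      hence "norm x ^ DIM('a) \<le> s ^ DIM('a)" by (intro power_mono) auto
      moreover have "sgn x \<in> A" using y sp by (simp add: C1_def sgn_scaleR)
      ultimately show "x \<in> {x::'a. sgn x \<in> A \<and> norm x ^ DIM('a) \<le> t}" using sn by simp
    qed
    have "emeasure lborel {x::'a. sgn x \<in> A \<and> norm x ^ DIM('a) \<le> t}
        = emeasure lebesgue {x::'a. sgn x \<in> A \<and> norm x ^ DIM('a) \<le> t}" by simp
    also have "\<dots> = emeasure lebesgue ((\<lambda>y. s *\<^sub>R y + 0) ` C1)" by (simp only: eqset)
    also have "\<dots> = ennreal (\<bar>s\<bar> ^ DIM('a)) * emeasure lebesgue C1"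
      by (rule emeasure_lebesgue_affine)
    also have "\<dots> = ennreal t * emeasure lborel C0" using sp sn C10 by simp
    finally show ?thesis by (simp add: C0_def)
  qed
qed


lemma measure_eqI_atMost:
  fixes M N :: "real measure"
  assumes sets: "sets M = sets borel" "sets N = sets borel"
  assumes fin: "\<And>x. emeasure M {..x} < \<infinity>"
  assumes eq: "\<And>x. emeasure M {..x} = emeasure N {..x}"
  shows "M = N"
proof (rule measure_eqI_generator_eq_countable)
  let ?LT = "\<lambda>a::real. {..a}" let ?E = "range ?LT"
  show "Int_stable ?E"
  proof (rule Int_stableI)
    fix a b assume "a \<in> ?E" "b \<in> ?E"
    then obtain x y where "a = {..x}" "b = {..y}" by auto
    hence "a \<inter> b = {..min x y}" by auto
    thus "a \<inter> b \<in> ?E" by blast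
  qed
  show "?E \<subseteq> Pow UNIV" "sets M = sigma_sets UNIV ?E" "sets N = sigma_sets UNIV ?E"
    unfolding sets borel_eq_atMost by auto
  show "(\<lambda>n::nat. ?LT (real n)) ` UNIV \<subseteq> ?E" by auto
  show "\<Union> ((\<lambda>n::nat. ?LT (real n)) ` UNIV) = UNIV"
  proof (rule set_eqI)
    fix x :: real
    obtain n :: nat where "x \<le> real n" using real_arch_simple by blast
    thus "x \<in> \<Union> ((\<lambda>n::nat. ?LT (real n)) ` UNIV) \<longleftrightarrow> x \<in> UNIV" by auto
  qed
  show "countable ((\<lambda>n::nat. ?LT (real n)) ` UNIV)" by simp
  show "\<And>a. a \<in> (\<lambda>n::nat. ?LT (real n)) ` UNIV \<Longrightarrow> emeasure M a \<noteq> \<infinity>"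
    using fin by (auto simp: less_top)
  show "\<And>X. X \<in> ?E \<Longrightarrow> emeasure M X = emeasure N X" using eq by auto
qed

lemma prod_rect:
  fixes A :: "'a::euclidean_space set" and B :: "real set"
  assumes A[measurable]: "A \<in> sets borel" and B[measurable]: "B \<in> sets borel"
  shows "emeasure lborel {x::'a. sgn x \<in> A \<and> norm x ^ DIM('a) \<in> B}
       = emeasure lborel {x::'a. sgn x \<in> A \<and> norm x < 1} * emeasure lborel ({0..} \<inter> B)"
proof -
  define c where "c = emeasure lborel {x::'a. sgn x \<in> A \<and> norm x < 1}"
  have "{x::'a. sgn x \<in> A \<and> norm x < 1} \<subseteq> ball 0 1" by (simp add: subset_eq dist_norm)
  hence "c \<le> emeasure lborel (ball (0::'a) 1)"
    unfolding c_def by (rule emeasure_mono) simp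
  hence "c \<le> ennreal (unit_ball_vol DIM('a) * 1 ^ DIM('a))" by (simp only: emeasure_ball)
  hence cfin: "c < \<infinity>" by (rule order.strict_trans1) simp
  have SA[measurable]: "{x::'a. sgn x \<in> A} \<in> sets borel"
    using measurable_sets_borel[OF borel_measurable_sgn A] by (simp add: vimage_def)
  define Q where "Q = distr (density lborel (indicator {x::'a. sgn x \<in> A})) borel (\<lambda>x. norm x ^ DIM('a))"
  define N where "N = density (density lborel (indicator {0::real..})) (\<lambda>_. c)"
  have emQ: "emeasure Q X = emeasure lborel {x::'a. sgn x \<in> A \<and> norm x ^ DIM('a) \<in> X}"
    if X[measurable]: "X \<in> sets borel" for X
  proof -
    have pre: "(\<lambda>x::'a. norm x ^ DIM('a)) -` X \<in> sets borel"
      by (rule measurable_sets_borel[OF _ X]) simp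
    have "emeasure Q X = emeasure (density lborel (indicator {x::'a. sgn x \<in> A}))
        ((\<lambda>x. norm x ^ DIM('a)) -` X \<inter> space (density lborel (indicator {x::'a. sgn x \<in> A})))"
      unfolding Q_def by (rule emeasure_distr) auto
    also have "\<dots> = emeasure lborel ({x::'a. sgn x \<in> A} \<inter> ((\<lambda>x. norm x ^ DIM('a)) -` X))"
      using pre by (subst emeasure_restricted) auto
    also have "{x::'a. sgn x \<in> A} \<inter> ((\<lambda>x. norm x ^ DIM('a)) -` X)
        = {x::'a. sgn x \<in> A \<and> norm x ^ DIM('a) \<in> X}" by auto
    finally show ?thesis .
  qed
  have emN: "emeasure N X = c * emeasure lborel ({0..} \<inter> X)" if X[measurable]: "X \<in> sets borel" for X
    unfolding N_def by (simp add: emeasure_density_const emeasure_restricted)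
  have atm: "emeasure lborel ({0..} \<inter> {..t}) = ennreal (max t 0)" for t :: real
  proof (cases "t \<ge> 0")
    case True
    have "{0..} \<inter> {..t} = {0..t}" by auto
    thus ?thesis using True by simp
  next
    case False
    hence "{0..} \<inter> {..t} = {}" by auto
    thus ?thesis using False by simp
  qed
  have QN: "Q = N"
  proof (rule measure_eqI_atMost)
    show "sets Q = sets borel" "sets N = sets borel" by (simp_all add: Q_def N_def)
    fix t :: real
    have "emeasure Q {..t} = ennreal (max t 0) * c"
    proof (cases "t \<ge> 0")
      case True
      have "emeasure Q {..t} = emeasure lborel {x::'a. sgn x \<in> A \<and> norm x ^ DIM('a) \<le> t}"
        by (simp add: emQ)
      also have "\<dots> = ennreal t * c" unfolding c_def by (rule cone_scale[OF A True])
      finally show ?thesis using True by simp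
    next
      case False
      have emp: "{x::'a. sgn x \<in> A \<and> norm x ^ DIM('a) \<le> t} = {}"
      proof -
        have "\<not> norm x ^ DIM('a) \<le> t" for x :: 'a
        proof -
          have "0 \<le> norm x ^ DIM('a)" by simp
          thus ?thesis using False by linarith
        qed
        thus ?thesis by auto
      qed
      have "emeasure Q {..t} = emeasure lborel {x::'a. sgn x \<in> A \<and> norm x ^ DIM('a) \<le> t}"
        by (simp add: emQ)
      hence "emeasure Q {..t} = 0" unfolding emp by simp
      thus ?thesis using False by simp
    qed
    thus "emeasure Q {..t} < \<infinity>" using cfin by (simp add: ennreal_mult_less_top)
    show "emeasure Q {..t} = emeasure N {..t}"
      using \<open>emeasure Q {..t} = ennreal (max t 0) * c\<close> by (simp add: emN atm mult.commute)
  qed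
  have "emeasure lborel {x::'a. sgn x \<in> A \<and> norm x ^ DIM('a) \<in> B} = emeasure Q B"
    by (simp add: emQ)
  also have "\<dots> = emeasure N B" by (simp add: QN)
  also have "\<dots> = c * emeasure lborel ({0..} \<inter> B)" by (simp add: emN)
  finally show ?thesis unfolding c_def .
qed


lemma vol_star:
  fixes h :: "'a::euclidean_space \<Rightarrow> real"
  assumes h[measurable]: "h \<in> borel_measurable borel" and hnn: "\<And>u. h u \<ge> 0"
  shows "emeasure lborel {x::'a. norm x ^ DIM('a) \<le> h (sgn x)}
       = (\<integral>\<^sup>+x. indicator (ball 0 1) x * ennreal (h (sgn x)) \<partial>lborel)"
proof -
  define \<nu> :: "'a measure" where "\<nu> = distr (density lborel (indicator (ball 0 1))) borel sgn"
  define M2 :: "real measure" where "M2 = density lborel (indicator {0..})"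
  define M where "M = distr lborel (borel \<Otimes>\<^sub>M borel) (\<lambda>x::'a. (sgn x, norm x ^ DIM('a)))"
  have sets_\<nu>: "sets \<nu> = sets borel" by (simp add: \<nu>_def)
  have sets_M2: "sets M2 = sets borel" by (simp add: M2_def)
  have sets_M: "sets M = sets (borel \<Otimes>\<^sub>M borel)" by (simp add: M_def)
  have em\<nu>: "emeasure \<nu> A = emeasure lborel {x::'a. sgn x \<in> A \<and> norm x < 1}"
    if A: "A \<in> sets borel" for A
  proof -
    have pre: "sgn -` A \<in> sets (borel :: 'a measure)"
      by (rule measurable_sets_borel[OF borel_measurable_sgn A])
    have "emeasure \<nu> A = emeasure (density lborel (indicator (ball 0 1)))
             (sgn -` A \<inter> space (density lborel (indicator (ball (0::'a) 1))))"
      unfolding \<nu>_def using A by (intro emeasure_distr) auto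
    also have "\<dots> = emeasure lborel (ball 0 1 \<inter> sgn -` A)"
      using pre by (subst emeasure_restricted) auto
    also have "ball 0 1 \<inter> sgn -` A = {x::'a. sgn x \<in> A \<and> norm x < 1}"
      by (auto simp: dist_norm)
    finally show ?thesis .
  qed
  have emM2: "emeasure M2 B = emeasure lborel ({0..} \<inter> B)" if "B \<in> sets borel" for B
    unfolding M2_def using that by (simp add: emeasure_restricted)
  have "emeasure \<nu> (space \<nu>) = emeasure lborel {x::'a. sgn x \<in> UNIV \<and> norm x < 1}"
    using em\<nu>[of UNIV] by (simp add: \<nu>_def)
  also have "{x::'a. sgn x \<in> UNIV \<and> norm x < 1} = ball 0 1" by (auto simp: dist_norm)
  finally have "emeasure \<nu> (space \<nu>) = ennreal (unit_ball_vol DIM('a) * 1 ^ DIM('a))"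
    by (simp only: emeasure_ball)
  hence "finite_measure \<nu>" by (intro finite_measureI) simp
  hence sf\<nu>: "sigma_finite_measure \<nu>" by (rule finite_measure.axioms(1))
  have sfM2: "sigma_finite_measure M2"
    unfolding M2_def by (subst sigma_finite_measure.sigma_finite_iff_density_finite[OF sigma_finite_lborel]) (auto intro!: AE_I2 simp: indicator_def)
  have prod: "\<nu> \<Otimes>\<^sub>M M2 = M"
  proof (rule pair_measure_eqI[OF sf\<nu> sfM2])
    show "sets (\<nu> \<Otimes>\<^sub>M M2) = sets M"
      unfolding sets_M by (rule sets_pair_measure_cong[OF sets_\<nu> sets_M2])
    fix A B assume "A \<in> sets \<nu>" "B \<in> sets M2"
    hence A: "A \<in> sets borel" and B: "B \<in> sets borel" using sets_\<nu> sets_M2 by auto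
    have AB: "A \<times> B \<in> sets (borel \<Otimes>\<^sub>M borel)" using A B by simp
    have "emeasure M (A \<times> B) = emeasure lborel ((\<lambda>x::'a. (sgn x, norm x ^ DIM('a))) -` (A \<times> B) \<inter> space lborel)"
      unfolding M_def using AB by (intro emeasure_distr) auto
    also have "(\<lambda>x::'a. (sgn x, norm x ^ DIM('a))) -` (A \<times> B) \<inter> space lborel
        = {x::'a. sgn x \<in> A \<and> norm x ^ DIM('a) \<in> B}" by auto
    also have "emeasure lborel \<dots> = emeasure \<nu> A * emeasure M2 B"
      by (simp add: prod_rect[OF A B] em\<nu>[OF A] emM2[OF B])
    finally show "emeasure \<nu> A * emeasure M2 B = emeasure M (A \<times> B)" by simp
  qed
  define G where "G = {p :: 'a \<times> real. snd p \<le> h (fst p)}"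
  have "{p \<in> space (borel \<Otimes>\<^sub>M borel). snd p \<le> h (fst p)} \<in> sets (borel \<Otimes>\<^sub>M (borel :: real measure))"
    by measurable
  hence Gm: "G \<in> sets (borel \<Otimes>\<^sub>M borel)" unfolding G_def by (simp add: space_pair_measure)
  have "emeasure lborel {x::'a. norm x ^ DIM('a) \<le> h (sgn x)}
      = emeasure lborel ((\<lambda>x::'a. (sgn x, norm x ^ DIM('a))) -` G \<inter> space lborel)"
    by (simp add: G_def)
  also have "\<dots> = emeasure M G"
    unfolding M_def using Gm by (intro emeasure_distr[symmetric]) auto
  also have "\<dots> = emeasure (\<nu> \<Otimes>\<^sub>M M2) G" by (simp add: prod)
  also have "\<dots> = (\<integral>\<^sup>+u. emeasure M2 (Pair u -` G) \<partial>\<nu>)"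
  proof (rule sigma_finite_measure.emeasure_pair_measure_alt[OF sfM2])
    have "sets (\<nu> \<Otimes>\<^sub>M M2) = sets (borel \<Otimes>\<^sub>M borel)"
      by (rule sets_pair_measure_cong[OF sets_\<nu> sets_M2])
    thus "G \<in> sets (\<nu> \<Otimes>\<^sub>M M2)" using Gm by simp
  qed
  also have "\<dots> = (\<integral>\<^sup>+u. ennreal (h u) \<partial>\<nu>)"
  proof (rule nn_integral_cong)
    fix u
    have "Pair u -` G = {..h u}" by (auto simp: G_def)
    moreover have "{0..} \<inter> {..h u} = {0..h u}" by auto
    ultimately show "emeasure M2 (Pair u -` G) = ennreal (h u)"
      using hnn[of u] by (simp add: emM2)
  qed
  also have "\<dots> = (\<integral>\<^sup>+x. ennreal (h (sgn x)) \<partial>density lborel (indicator (ball (0::'a) 1)))"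
    unfolding \<nu>_def by (subst nn_integral_distr) auto
  also have "\<dots> = (\<integral>\<^sup>+x. indicator (ball 0 1) x * ennreal (h (sgn x)) \<partial>lborel)"
    by (subst nn_integral_density) (auto intro: borel_measurable_indicator)
  finally show ?thesis .
qed


lemma cs_lip:
  assumes "bounded S" "S \<noteq> {}" "\<And>y. y \<in> S \<Longrightarrow> norm y \<le> R" "R \<ge> 0"
  shows "continuous_on UNIV (cyl_support S)"
proof -
  have le: "cyl_support S x \<le> cyl_support S x' + norm (x - x') * R" for x x'
  proof (rule cs_least[OF assms(2)])
    fix z assume z: "z \<in> S"
    have "sinbr x z \<le> sinbr x' z + norm (x - x') * norm z" by (rule sinbr_lip)
    also have "\<dots> \<le> cyl_support S x' + norm (x - x') * R"
      using cs_upper[OF assms(1) z, of x'] assms(3)[OF z] mult_left_mono[of "norm z" R "norm (x - x')"]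
      by simp
    finally show "sinbr x z \<le> cyl_support S x' + norm (x - x') * R" .
  qed
  have "R-lipschitz_on UNIV (cyl_support S)"
  proof (rule lipschitz_onI)
    fix x y :: 'a
    have "cyl_support S x \<le> cyl_support S y + norm (x - y) * R" by (rule le)
    moreover have "cyl_support S y \<le> cyl_support S x + norm (y - x) * R" by (rule le)
    moreover have "norm (y - x) = norm (x - y)" by (rule norm_minus_commute)
    ultimately show "dist (cyl_support S x) (cyl_support S y) \<le> R * dist x y"
      by (simp add: dist_real_def dist_norm abs_le_iff mult.commute)
  qed (rule assms(4))
  thus ?thesis by (rule lipschitz_on_continuous_on)
qed

theorem proposition3p9:
  fixes K :: "'a::euclidean_space set"
  assumes "DIM('a) \<ge> 2"
    and "K \<in> cyl_class"
  shows "(\<forall>u. norm u = 1 \<longrightarrow>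
            radial_fun (sine_polar K) u * cyl_support K u = 1 \<and>
            radial_fun K u * cyl_support (sine_polar K) u = 1)
       \<and> measure lebesgue (sine_polar K) =
           omega DIM('a) * (\<integral>u. 1 / (cyl_support K u) ^ DIM('a) \<partial>sphere_prob)"
proof -
  have Kc: "compact K" using assms(2) by (simp add: cyl_class_def convex_body_def)
  hence Kb: "bounded K" by (rule compact_imp_bounded)
  obtain d where d: "d > 0" "ball 0 d \<subseteq> K" using K_ball[OF assms(2)] by blast
  have "0 \<in> ball (0::'a) d" using d(1) by simp
  hence Kne: "K \<noteq> {}" using d(2) by blast
  obtain R where R: "R > 0" "\<And>y. y \<in> K \<Longrightarrow> norm y \<le> R" using Kb bounded_pos by blast
  define P where "P = sine_polar K"
  have Pb: "bounded P" unfolding P_def by (rule polar_bounded[OF assms(1) d(2) d(1)])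
  have Pne: "P \<noteq> {}" unfolding P_def using zero_in_polar by blast
  have Pball: "ball 0 (1/R) \<subseteq> P" unfolding P_def by (rule polar_ball[OF R(2) R(1)])
  have PP: "sine_polar P = K" unfolding P_def by (rule K_bipolar[OF assms(2)])
  have part1: "radial_fun P u * cyl_support K u = 1 \<and> radial_fun K u * cyl_support P u = 1"
    if u: "norm u = 1" for u
  proof
    have "cyl_support K u \<ge> norm u * (d / 2)" by (rule cs_pos[OF assms(1) Kb d(2) d(1)])
    hence c1: "cyl_support K u > 0" using u d(1) by simp
    have "radial_fun P u = 1 / cyl_support K u" unfolding P_def by (rule radial_polar[OF Kb Kne c1])
    thus "radial_fun P u * cyl_support K u = 1" using c1 by simp
    have "cyl_support P u \<ge> norm u * ((1/R) / 2)"
      by (rule cs_pos[OF assms(1) Pb Pball]) (use R(1) in simp)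
    hence "1 / R / 2 \<le> cyl_support P u" using u by simp
    moreover have "0 < 1 / R / 2" using R(1) by simp
    ultimately have c2: "cyl_support P u > 0" by linarith
    have "radial_fun (sine_polar P) u = 1 / cyl_support P u" by (rule radial_polar[OF Pb Pne c2])
    hence "radial_fun K u = 1 / cyl_support P u" by (simp only: PP)
    thus "radial_fun K u * cyl_support P u = 1" using c2 by simp
  qed
  define h where "h u = 1 / (cyl_support K u) ^ DIM('a)" for u
  have R0: "0 \<le> R" using R(1) by simp
  have ccont: "continuous_on UNIV (cyl_support K)"
    by (rule cs_lip[OF Kb Kne R(2) R0])
  have cm[measurable]: "cyl_support K \<in> borel_measurable borel"
    by (rule borel_measurable_continuous_onI[OF ccont])
  have hm[measurable]: "h \<in> borel_measurable borel" unfolding h_def by measurable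
  have hnn: "h u \<ge> 0" for u unfolding h_def using cs_nonneg[OF Kb Kne, of u] by simp
  have Pset: "P = {x::'a. norm x ^ DIM('a) \<le> h (sgn x)}"
  proof (rule set_eqI)
    fix x :: 'a
    show "x \<in> P \<longleftrightarrow> x \<in> {x::'a. norm x ^ DIM('a) \<le> h (sgn x)}"
    proof (cases "x = 0")
      case True
      have "cyl_support K (0 *\<^sub>R x) = 0 * cyl_support K x" by (rule cs_scale[OF Kb Kne]) simp
      hence "cyl_support K x \<le> 1" using True by simp
      hence "x \<in> P" unfolding P_def using polar_iff[OF Kb Kne] by blast
      moreover have "norm x ^ DIM('a) \<le> h (sgn x)"
        using True hnn[of "sgn x"] DIM_positive[where 'a='a] by (simp add: zero_power)
      ultimately show ?thesis by simp
    next
      case False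
      have sx: "norm (sgn x) = 1" using False by (simp add: norm_sgn)
      have "cyl_support K (sgn x) \<ge> norm (sgn x) * (d / 2)" by (rule cs_pos[OF assms(1) Kb d(2) d(1)])
      hence c: "cyl_support K (sgn x) > 0" using sx d(1) by simp
      have xe: "x = norm x *\<^sub>R sgn x" using False by (simp add: sgn_div_norm)
      have "cyl_support K x = norm x * cyl_support K (sgn x)"
        by (subst xe, rule cs_scale[OF Kb Kne]) simp
      hence "x \<in> P \<longleftrightarrow> norm x * cyl_support K (sgn x) \<le> 1"
        unfolding P_def using polar_iff[OF Kb Kne, of x] by simp
      also have "\<dots> \<longleftrightarrow> norm x \<le> 1 / cyl_support K (sgn x)" using c by (simp add: le_divide_eq)
      also have "\<dots> \<longleftrightarrow> norm x ^ DIM('a) \<le> (1 / cyl_support K (sgn x)) ^ DIM('a)"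
        using c power_mono_iff[of "norm x" "1 / cyl_support K (sgn x)" "DIM('a)"] by simp
      also have "\<dots> \<longleftrightarrow> x \<in> {x::'a. norm x ^ DIM('a) \<le> h (sgn x)}"
        by (simp add: h_def power_one_over)
      finally show ?thesis .
    qed
  qed
  have Pm: "P \<in> sets borel"
  proof -
    have "{x \<in> space borel. norm x ^ DIM('a) \<le> h (sgn x)} \<in> sets (borel :: 'a measure)" by measurable
    thus ?thesis unfolding Pset by simp
  qed
  have vol: "emeasure lborel P = (\<integral>\<^sup>+x. indicator (ball 0 1) x * ennreal (h (sgn x)) \<partial>lborel)"
    unfolding Pset by (rule vol_star[OF hm hnn])
  have "emeasure lborel P < \<infinity>" by (rule emeasure_bounded_finite[OF Pb])
  define r where "r = measure lborel P"
  have r: "emeasure lborel P = ennreal r" "r \<ge> 0"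
    using \<open>emeasure lborel P < \<infinity>\<close> unfolding r_def
    by (simp_all add: emeasure_eq_ennreal_measure less_top)
  have lhs: "measure lebesgue P = r"
    using Pm unfolding r_def by simp
  define V where "V = unit_ball_vol DIM('a)"
  have Vp: "V > 0" unfolding V_def by simp
  have omV: "omega DIM('a) = V" unfolding V_def omega_def unit_ball_vol_def by (simp add: add.commute)
  have "(\<integral>u. 1 / (cyl_support K u) ^ DIM('a) \<partial>sphere_prob) = (\<integral>u. h u \<partial>sphere_prob)"
    by (simp add: h_def)
  also have "\<dots> = (\<integral>x. h (sgn x) \<partial>uniform_measure lborel (ball (0::'a) 1))"
    unfolding sphere_prob_def by (rule integral_distr) auto
  also have "\<dots> = enn2real (\<integral>\<^sup>+x. ennreal (h (sgn x)) \<partial>uniform_measure lborel (ball (0::'a) 1))"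
    by (rule integral_eq_nn_integral) (auto simp: hnn)
  also have "(\<integral>\<^sup>+x. ennreal (h (sgn x)) \<partial>uniform_measure lborel (ball (0::'a) 1))
      = (\<integral>\<^sup>+x. ennreal (h (sgn x)) * indicator (ball 0 1) x \<partial>lborel) / emeasure lborel (ball (0::'a) 1)"
    by (rule nn_integral_uniform_measure) auto
  also have "(\<integral>\<^sup>+x. ennreal (h (sgn x)) * indicator (ball 0 1) x \<partial>lborel) = ennreal r"
    using vol r by (simp add: mult.commute)
  also have "emeasure lborel (ball (0::'a) 1) = ennreal V" by (simp add: emeasure_ball V_def)
  also have "ennreal r / ennreal V = ennreal (r / V)" using r(2) Vp by (rule divide_ennreal)
  finally have rhs: "(\<integral>u. 1 / (cyl_support K u) ^ DIM('a) \<partial>sphere_prob) = r / V"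
    using r(2) Vp by simp
  show ?thesis
    using part1 lhs rhs omV Vp unfolding P_def by simp
qed


end
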